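(* For any $r,m\in\mathbb{N}$ and $\varepsilon,\delta>0$ there is $D\in\mathbb{N}$ such that for any $n\ge D$ and any $\mathcal{F}\subset[m]^n$ there is $T\subset[n]$ with $|T|\le D$ such that $\Pr_{\mathbf{a}\in[m]^T}\big[\mathcal{F}_{T\to\mathbf{a}}\text{ is not }(r,\varepsilon)\text{-pseudorandom}\big]\le\delta$, where $\mathbf{a}$ is uniform in $[m]^T$.
   Context: $\mu$ denotes the uniform probability measure on the relevant product space $[m]^{I}$. For $R\subset[n]$ and $a\in[m]^R$, the restriction is $\mathcal{F}_{R\to a}=\{x\in[m]^{[n]\setminus R}: (x_R=a,x_{[n]\setminus R}=x)\in\mathcal{F}\}\subset[m]^{[n]\setminus R}$. A family $\mathcal{G}\subset[m]^{I}$ is $(r,\varepsilon)$-pseudorandom if for every $R\subset I$ with $|R|\le r$ and every $a\in[m]^R$ we have $|\mu(\mathcal{G}_{R\to a})-\mu(\mathcal{G})|\le\varepsilon$. *)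

theory Defs
  imports "HOL-Library.FuncSet" Complex_Main
begin

text \<open>[m] is rendered as {..<m}; [m]^I as the extensional function space I \<rightarrow>E {..<m}.\<close>

definition cube :: "nat \<Rightarrow> 'i set \<Rightarrow> ('i \<Rightarrow> nat) set" where
  "cube m I = PiE I (\<lambda>_. {..<m})"

definition mu :: "nat \<Rightarrow> 'i set \<Rightarrow> ('i \<Rightarrow> nat) set \<Rightarrow> real" where
  "mu m I G = real (card (G \<inter> cube m I)) / real (card (cube m I))"

definition restr :: "nat \<Rightarrow> 'i set \<Rightarrow> ('i \<Rightarrow> nat) set \<Rightarrow> 'i set \<Rightarrow> ('i \<Rightarrow> nat) \<Rightarrow> ('i \<Rightarrow> nat) set" where
  "restr m I F R a = {x \<in> cube m (I - R). (\<lambda>i. if i \<in> R then a i else x i) \<in> F}"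

definition pseudorandom :: "nat \<Rightarrow> 'i set \<Rightarrow> nat \<Rightarrow> real \<Rightarrow> ('i \<Rightarrow> nat) set \<Rightarrow> bool" where
  "pseudorandom m I r \<epsilon> G \<longleftrightarrow>
     (\<forall>R. R \<subseteq> I \<and> card R \<le> r \<longrightarrow>
        (\<forall>a \<in> cube m R. \<bar>mu m (I - R) (restr m I G R a) - mu m I G\<bar> \<le> \<epsilon>))"

end

theory Submission imports Defs begin

lemma card_cube: "finite T \<Longrightarrow> card (cube m T) = m ^ card T"
  by (simp add: cube_def card_PiE)

locale fam =
  fixes m :: nat and N :: "'i set" and F :: "('i \<Rightarrow> nat) set"
  assumes finN: "finite N" and FQ: "F \<subseteq> cube m N" and mpos: "m > 0"
begin

definition cls :: "'i set \<Rightarrow> ('i \<Rightarrow> nat) \<Rightarrow> ('i \<Rightarrow> nat) set" where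
  "cls S x = {y \<in> cube m N. \<forall>i\<in>S. y i = x i}"

definition cnt :: "'i set \<Rightarrow> ('i \<Rightarrow> nat) \<Rightarrow> nat" where
  "cnt S x = card {y \<in> F. \<forall>i\<in>S. y i = x i}"

definition f :: "'i set \<Rightarrow> ('i \<Rightarrow> nat) \<Rightarrow> real" where
  "f S x = real (cnt S x) / real m ^ card (N - S)"

definition Phi :: "'i set \<Rightarrow> real" where
  "Phi S = (\<Sum>y\<in>cube m N. (f S y)^2)"

lemma finQ: "finite (cube m N)"
  using finN by (simp add: cube_def finite_PiE)

lemma fin_cls: "finite (cls S x)"
  using finQ by (simp add: cls_def)

lemma finF: "finite F" using finQ FQ finite_subset by blast

lemma card_cls:
  assumes "S \<subseteq> N" "\<forall>i\<in>S. x i < m"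
  shows "card (cls S x) = m ^ card (N - S)"
proof -
  have "cls S x = PiE N (\<lambda>i. if i \<in> S then {x i} else {..<m})"
    using assms by (auto simp: cls_def cube_def PiE_iff extensional_def split: if_splits)
  then have "card (cls S x) = (\<Prod>i\<in>N. card (if i \<in> S then {x i} else {..<m}))"
    using finN by (simp add: card_PiE)
  also have "\<dots> = (\<Prod>i\<in>N. if i \<in> S then 1 else m)"
    by (rule prod.cong) auto
  also have "\<dots> = m ^ card (N - S)"
    using finN by (simp add: prod.If_cases Diff_eq)
  finally show ?thesis .
qed

lemma cls_mem: "y \<in> cls S x \<Longrightarrow> T \<subseteq> N \<Longrightarrow> \<forall>i\<in>T. y i < m"
  by (auto simp: cls_def cube_def PiE_iff)

lemma F_mem: "z \<in> F \<Longrightarrow> S \<subseteq> N \<Longrightarrow> \<forall>i\<in>S. z i < m"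
  using FQ by (auto simp: cube_def PiE_iff)

lemma cnt_cong: "\<forall>i\<in>S. x i = y i \<Longrightarrow> cnt S x = cnt S y"
  unfolding cnt_def by (rule arg_cong[where f=card]) auto

lemma f_cong: "\<forall>i\<in>S. x i = y i \<Longrightarrow> f S x = f S y"
  using cnt_cong by (simp add: f_def)

lemma cnt_sum:
  shows "real (cnt S x) = (\<Sum>z\<in>cls S x. if z \<in> F then 1 else 0)"
proof -
  have "{y \<in> F. \<forall>i\<in>S. y i = x i} = {z \<in> cls S x. z \<in> F}"
    using FQ by (auto simp: cls_def)
  then show ?thesis
    using fin_cls by (simp add: cnt_def sum.inter_filter[symmetric])
qed

lemma dcount:
  assumes "S \<subseteq> S'" "S' \<subseteq> N"
  shows "(\<Sum>y\<in>cls S x. \<Sum>z\<in>cls S' y. h z) = real m ^ card (N - S') * (\<Sum>z\<in>cls S x. h z)"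
proof -
  have "(\<Sum>y\<in>cls S x. \<Sum>z\<in>cls S' y. h z) = (\<Sum>y\<in>cls S x. \<Sum>z\<in>cls S x. if \<forall>i\<in>S'. z i = y i then h z else 0)"
  proof (rule sum.cong[OF refl])
    fix y assume y: "y \<in> cls S x"
    have "cls S' y = {z \<in> cls S x. \<forall>i\<in>S'. z i = y i}"
      using y assms by (auto simp: cls_def)
    then show "(\<Sum>z\<in>cls S' y. h z) = (\<Sum>z\<in>cls S x. if \<forall>i\<in>S'. z i = y i then h z else 0)"
      using fin_cls by (simp add: sum.inter_filter)
  qed
  also have "\<dots> = (\<Sum>z\<in>cls S x. \<Sum>y\<in>cls S x. if \<forall>i\<in>S'. z i = y i then h z else 0)"
    by (rule sum.swap)
  also have "\<dots> = (\<Sum>z\<in>cls S x. real m ^ card (N - S') * h z)"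
  proof (rule sum.cong[OF refl])
    fix z assume z: "z \<in> cls S x"
    have e: "{y \<in> cls S x. \<forall>i\<in>S'. z i = y i} = cls S' z"
      using z assms by (auto simp: cls_def)
    have "(\<Sum>y\<in>cls S x. if \<forall>i\<in>S'. z i = y i then h z else 0) = (\<Sum>y\<in>{y \<in> cls S x. \<forall>i\<in>S'. z i = y i}. h z)"
      by (rule sum.inter_filter[symmetric, OF fin_cls])
    also have "\<dots> = real (card (cls S' z)) * h z" by (simp add: e)
    also have "\<dots> = real m ^ card (N - S') * h z"
      using card_cls[OF assms(2) cls_mem[OF z assms(2)]] by simp
    finally show "(\<Sum>y\<in>cls S x. if \<forall>i\<in>S'. z i = y i then h z else 0) = real m ^ card (N - S') * h z" .
  qed
  also have "\<dots> = real m ^ card (N - S') * (\<Sum>z\<in>cls S x. h z)"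
    by (simp add: sum_distrib_left)
  finally show ?thesis .
qed

lemma tower:
  assumes "S \<subseteq> S'" "S' \<subseteq> N"
  shows "(\<Sum>y\<in>cls S x. f S' y) = real (cnt S x)"
proof -
  have "(\<Sum>y\<in>cls S x. real (cnt S' y)) = (\<Sum>y\<in>cls S x. \<Sum>z\<in>cls S' y. if z \<in> F then 1 else 0)"
    by (simp add: cnt_sum)
  also have "\<dots> = real m ^ card (N - S') * (\<Sum>z\<in>cls S x. if z \<in> F then 1 else 0)"
    by (rule dcount[OF assms])
  also have "\<dots> = real m ^ card (N - S') * real (cnt S x)"
    by (simp add: cnt_sum)
  finally have e: "(\<Sum>y\<in>cls S x. real (cnt S' y)) = real m ^ card (N - S') * real (cnt S x)" .
  have "(\<Sum>y\<in>cls S x. f S' y) = (\<Sum>y\<in>cls S x. real (cnt S' y)) / real m ^ card (N - S')"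
    by (simp add: f_def sum_divide_distrib)
  also have "\<dots> = real (cnt S x)" using e mpos by simp
  finally show ?thesis .
qed

lemma pyth:
  assumes "S \<subseteq> S'" "S' \<subseteq> N" "\<forall>i\<in>S. x i < m"
  shows "(\<Sum>y\<in>cls S x. (f S' y)^2) - (\<Sum>y\<in>cls S x. (f S y)^2) = (\<Sum>y\<in>cls S x. (f S' y - f S y)^2)"
proof -
  define C where "C = cls S x"
  define c where "c = f S x"
  have fc: "\<And>y. y \<in> C \<Longrightarrow> f S y = c"
    unfolding C_def c_def cls_def by (rule f_cong) auto
  have SN: "S \<subseteq> N" using assms by auto
  have cc: "real (card C) * c = real (cnt S x)"
    using card_cls[OF SN assms(3)] mpos by (simp add: C_def c_def f_def)
  have t: "(\<Sum>y\<in>C. f S' y) = real (cnt S x)" unfolding C_def by (rule tower[OF assms(1,2)])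
  have "(\<Sum>y\<in>C. (f S' y - f S y)^2) = (\<Sum>y\<in>C. (f S' y)^2 - 2*c*f S' y + c^2)"
    by (rule sum.cong[OF refl]) (simp add: fc power2_diff)
  also have "\<dots> = (\<Sum>y\<in>C. (f S' y)^2) - 2*c*(\<Sum>y\<in>C. f S' y) + real (card C) * c^2"
    by (simp add: sum.distrib sum_subtractf sum_distrib_left)
  also have "\<dots> = (\<Sum>y\<in>C. (f S' y)^2) - real (card C) * c^2"
    using t cc by (simp add: power2_eq_square algebra_simps)
  finally have A: "(\<Sum>y\<in>C. (f S' y - f S y)^2) = (\<Sum>y\<in>C. (f S' y)^2) - real (card C) * c^2" .
  have B: "(\<Sum>y\<in>C. (f S y)^2) = real (card C) * c^2"
    using fc by simp
  show ?thesis using A B by (simp add: C_def)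
qed

lemma sq_mono:
  assumes "S' \<subseteq> S''" "S'' \<subseteq> N" "S \<subseteq> S'" 
  shows "(\<Sum>y\<in>cls S x. (f S' y)^2) \<le> (\<Sum>y\<in>cls S x. (f S'' y)^2)"
proof -
  let ?h = "\<lambda>z. (f S'' z)^2 - (f S' z)^2"
  have SN: "S' \<subseteq> N" using assms by auto
  have "0 \<le> (\<Sum>y\<in>cls S x. \<Sum>z\<in>cls S' y. ?h z)"
  proof (rule sum_nonneg)
    fix y assume y: "y \<in> cls S x"
    have "(\<Sum>z\<in>cls S' y. ?h z) = (\<Sum>z\<in>cls S' y. (f S'' z)^2) - (\<Sum>z\<in>cls S' y. (f S' z)^2)"
      by (simp add: sum_subtractf)
    also have "\<dots> = (\<Sum>z\<in>cls S' y. (f S'' z - f S' z)^2)"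
      by (rule pyth[OF assms(1,2) cls_mem[OF y SN]])
    finally show "0 \<le> (\<Sum>z\<in>cls S' y. ?h z)" by (simp add: sum_nonneg)
  qed
  also have "\<dots> = real m ^ card (N - S') * (\<Sum>z\<in>cls S x. ?h z)"
    by (rule dcount[OF assms(3) SN])
  finally have h0: "0 \<le> real m ^ card (N - S') * (\<Sum>z\<in>cls S x. ?h z)" .
  have "real m ^ card (N - S') > 0" using mpos by simp
  then have "0 \<le> (\<Sum>z\<in>cls S x. ?h z)"
    using h0 by (smt (verit) mult_pos_neg)
  then show ?thesis by (simp add: sum_subtractf)
qed

lemma var_mono:
  assumes "S \<subseteq> S'" "S' \<subseteq> S''" "S'' \<subseteq> N" "\<forall>i\<in>S. x i < m"
  shows "(\<Sum>y\<in>cls S x. (f S' y - f S y)^2) \<le> (\<Sum>y\<in>cls S x. (f S'' y - f S y)^2)"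
proof -
  have "(\<Sum>y\<in>cls S x. (f S' y - f S y)^2) = (\<Sum>y\<in>cls S x. (f S' y)^2) - (\<Sum>y\<in>cls S x. (f S y)^2)"
    using pyth[of S S' x] assms by auto
  also have "\<dots> \<le> (\<Sum>y\<in>cls S x. (f S'' y)^2) - (\<Sum>y\<in>cls S x. (f S y)^2)"
    using sq_mono[OF assms(2,3,1)] by simp
  also have "\<dots> = (\<Sum>y\<in>cls S x. (f S'' y - f S y)^2)"
    using pyth[of S S'' x] assms by auto
  finally show ?thesis .
qed

lemma decomp:
  assumes "T \<subseteq> N"
  shows "(\<Sum>y\<in>cube m N. g y) = (\<Sum>a\<in>cube m T. \<Sum>y\<in>cls T a. g y)"
proof -
  have "finite T" using finN assms finite_subset by auto
  then have fT: "finite (cube m T)" by (simp add: cube_def finite_PiE)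
  have im: "(\<lambda>y. restrict y T) ` cube m N \<subseteq> cube m T"
    using assms by (auto simp: cube_def PiE_iff)
  have "(\<Sum>a\<in>cube m T. sum g {y. y \<in> cube m N \<and> restrict y T = a}) = sum g (cube m N)"
    by (rule sum.group[OF finQ fT im])
  moreover have "\<And>a. a \<in> cube m T \<Longrightarrow> {y. y \<in> cube m N \<and> restrict y T = a} = cls T a"
    by (auto simp: cls_def cube_def PiE_iff extensional_def fun_eq_iff)
  ultimately show ?thesis by (metis (no_types, lifting) sum.cong)
qed

lemma finT: "T \<subseteq> N \<Longrightarrow> finite T" using finN finite_subset by auto

lemma mu_restr:
  assumes "T \<subseteq> N" "\<forall>i\<in>T. a i < m"
  shows "mu m (N - T) (restr m N F T a) = f T a"
proof -
  let ?A = "restr m N F T a" and ?B = "{y \<in> F. \<forall>i\<in>T. y i = a i}"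
  have "bij_betw (\<lambda>x i. if i \<in> T then a i else x i) ?A ?B"
  proof (rule bij_betw_byWitness[where f'="\<lambda>y. restrict y (N - T)"])
    show "\<forall>x\<in>?A. restrict (\<lambda>i. if i \<in> T then a i else x i) (N - T) = x"
      by (auto simp: restr_def cube_def PiE_iff extensional_def fun_eq_iff)
    show "\<forall>y\<in>?B. (\<lambda>i. if i \<in> T then a i else restrict y (N - T) i) = y"
      using FQ by (auto simp: cube_def PiE_iff extensional_def fun_eq_iff)
    show "(\<lambda>x i. if i \<in> T then a i else x i) ` ?A \<subseteq> ?B"
      by (auto simp: restr_def)
    have "\<And>y. y \<in> ?B \<Longrightarrow> (\<lambda>i. if i \<in> T then a i else restrict y (N - T) i) = y"
      using FQ by (auto simp: cube_def PiE_iff extensional_def fun_eq_iff)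
    then show "(\<lambda>y. restrict y (N - T)) ` ?B \<subseteq> ?A"
      using FQ by (auto simp: restr_def cube_def PiE_iff)
  qed
  then have "card ?A = cnt T a" by (simp add: cnt_def bij_betw_same_card)
  moreover have "?A \<inter> cube m (N - T) = ?A" by (auto simp: restr_def)
  moreover have "card (cube m (N - T)) = m ^ card (N - T)" using finN by (simp add: card_cube)
  ultimately show ?thesis by (simp add: mu_def f_def)
qed

lemma restr_restr:
  assumes "T \<subseteq> N" "R \<subseteq> N - T" "\<forall>i\<in>R. b i < m"
  shows "restr m (N - T) (restr m N F T a) R b = restr m N F (T \<union> R) (\<lambda>i. if i \<in> T then a i else b i)"
proof -
  have e: "N - T - R = N - (T \<union> R)" by auto
  have fe: "\<And>x. (\<lambda>i. if i \<in> T then a i else if i \<in> R then b i else x i) = (\<lambda>i. if i \<in> T \<union> R then (if i \<in> T then a i else b i) else x i)"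
    by auto
  show ?thesis
    unfolding restr_def e
    using assms by (auto simp: cube_def PiE_iff extensional_def fe)
qed

lemma pr_char:
  assumes "T \<subseteq> N" "\<forall>i\<in>T. a i < m"
  shows "pseudorandom m (N - T) r eps (restr m N F T a) \<longleftrightarrow>
    (\<forall>R. R \<subseteq> N - T \<and> card R \<le> r \<longrightarrow> (\<forall>b\<in>cube m R. \<bar>f (T \<union> R) (\<lambda>i. if i \<in> T then a i else b i) - f T a\<bar> \<le> eps))"
proof -
  have "\<And>R b. R \<subseteq> N - T \<Longrightarrow> b \<in> cube m R \<Longrightarrow>
     mu m (N - T - R) (restr m (N - T) (restr m N F T a) R b) = f (T \<union> R) (\<lambda>i. if i \<in> T then a i else b i)"
  proof -
    fix R b assume R: "R \<subseteq> N - T" and b: "b \<in> cube m R"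
    have bm: "\<forall>i\<in>R. b i < m" using b by (auto simp: cube_def PiE_iff)
    have e: "N - T - R = N - (T \<union> R)" by auto
    show "mu m (N - T - R) (restr m (N - T) (restr m N F T a) R b) = f (T \<union> R) (\<lambda>i. if i \<in> T then a i else b i)"
      unfolding restr_restr[OF assms(1) R bm] e
      by (rule mu_restr) (use assms R bm in auto)
  qed
  then show ?thesis
    unfolding pseudorandom_def mu_restr[OF assms] by auto
qed

lemma gain:
  assumes "T \<subseteq> N" "R \<subseteq> N - T" "card R \<le> r" "\<forall>i\<in>T. a i < m" "b \<in> cube m R"
    "eps \<le> \<bar>f (T \<union> R) (\<lambda>i. if i \<in> T then a i else b i) - f T a\<bar>" "0 \<le> eps"
  shows "eps^2 * real m ^ card (N - T) / real m ^ r \<le> (\<Sum>y\<in>cls T a. (f (T \<union> R) y - f T y)^2)"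
proof -
  define c where "c = (\<lambda>i. if i \<in> T then a i else b i)"
  define d where "d = f (T \<union> R) c - f T a"
  have bm: "\<forall>i\<in>R. b i < m" using assms(5) by (auto simp: cube_def PiE_iff)
  have cm: "\<forall>i\<in>T \<union> R. c i < m" using bm assms(4) by (auto simp: c_def)
  have TRN: "T \<union> R \<subseteq> N" using assms by auto
  have sub: "cls (T \<union> R) c \<subseteq> cls T a" by (auto simp: cls_def c_def)
  have "(\<Sum>y\<in>cls (T \<union> R) c. (f (T \<union> R) y - f T y)^2) \<le> (\<Sum>y\<in>cls T a. (f (T \<union> R) y - f T y)^2)"
    by (rule sum_mono2[OF fin_cls sub]) auto
  moreover have "(\<Sum>y\<in>cls (T \<union> R) c. (f (T \<union> R) y - f T y)^2) = (\<Sum>y\<in>cls (T \<union> R) c. d^2)"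
  proof (rule sum.cong[OF refl])
    fix y assume y: "y \<in> cls (T \<union> R) c"
    have "f (T \<union> R) y = f (T \<union> R) c" by (rule f_cong) (use y in \<open>auto simp: cls_def\<close>)
    moreover have "f T y = f T a" by (rule f_cong) (use y in \<open>auto simp: cls_def c_def\<close>)
    ultimately show "(f (T \<union> R) y - f T y)^2 = d^2" by (simp add: d_def)
  qed
  moreover have "card (cls (T \<union> R) c) = m ^ card (N - (T \<union> R))"
    by (rule card_cls[OF TRN cm])
  moreover have "eps^2 \<le> d^2"
    using assms(6,7) by (simp add: d_def c_def abs_le_square_iff[symmetric] power2_abs) 
  moreover have "real m ^ card (N - T) \<le> real m ^ card (N - (T \<union> R)) * real m ^ r"
  proof -
    have "N - T = (N - (T \<union> R)) \<union> R" using assms by auto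
    moreover have "finite R" using assms finN finite_subset by blast
    moreover have "(N - (T \<union> R)) \<inter> R = {}" by auto
    ultimately have "card (N - T) = card (N - (T \<union> R)) + card R"
      using card_Un_disjoint[OF finite_Diff[OF finN]] by metis
    then have "real m ^ card (N - T) = real m ^ card (N - (T \<union> R)) * real m ^ card R"
      by (simp add: power_add)
    also have "\<dots> \<le> real m ^ card (N - (T \<union> R)) * real m ^ r"
      using mpos assms(3) by (intro mult_left_mono power_increasing) auto
    finally show ?thesis .
  qed
  ultimately show ?thesis
  proof -
    assume A: "(\<Sum>y\<in>cls (T \<union> R) c. (f (T \<union> R) y - f T y)^2) \<le> (\<Sum>y\<in>cls T a. (f (T \<union> R) y - f T y)^2)"
      and B: "(\<Sum>y\<in>cls (T \<union> R) c. (f (T \<union> R) y - f T y)^2) = (\<Sum>y\<in>cls (T \<union> R) c. d^2)"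
      and C: "card (cls (T \<union> R) c) = m ^ card (N - (T \<union> R))"
      and D: "eps^2 \<le> d^2"
      and E: "real m ^ card (N - T) \<le> real m ^ card (N - (T \<union> R)) * real m ^ r"
    have pr: "real m ^ r > 0" using mpos by simp
    have "eps^2 * real m ^ card (N - T) / real m ^ r \<le> eps^2 * real m ^ card (N - (T \<union> R))"
      using E pr by (simp add: divide_le_eq mult_left_mono mult.assoc)
    also have "\<dots> \<le> d^2 * real m ^ card (N - (T \<union> R))"
      using D by (intro mult_right_mono) auto
    also have "\<dots> = (\<Sum>y\<in>cls (T \<union> R) c. d^2)" using C by simp
    finally show ?thesis using A B by linarith
  qed
qed

lemma f_bounds:
  assumes "S \<subseteq> N" "y \<in> cube m N"
  shows "0 \<le> f S y" "f S y \<le> 1"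
proof -
  show "0 \<le> f S y" by (simp add: f_def)
  have ym: "\<forall>i\<in>S. y i < m" using assms by (auto simp: cube_def PiE_iff)
  have "{z \<in> F. \<forall>i\<in>S. z i = y i} \<subseteq> cls S y" using FQ by (auto simp: cls_def)
  then have "cnt S y \<le> card (cls S y)" unfolding cnt_def by (intro card_mono fin_cls)
  then have "cnt S y \<le> m ^ card (N - S)" using card_cls[OF assms(1) ym] by simp
  then have "real (cnt S y) \<le> real m ^ card (N - S)" by (metis of_nat_le_iff of_nat_power)
  then show "f S y \<le> 1" using mpos by (simp add: f_def)
qed

lemma Phi_bounds:
  assumes "S \<subseteq> N"
  shows "0 \<le> Phi S" "Phi S \<le> real m ^ card N"
proof -
  show "0 \<le> Phi S" by (simp add: Phi_def sum_nonneg)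
  have "Phi S \<le> (\<Sum>y\<in>cube m N. 1)"
    unfolding Phi_def
  proof (rule sum_mono)
    fix y assume "y \<in> cube m N"
    from f_bounds[OF assms this] show "(f S y)^2 \<le> 1" by (simp add: power_le_one)
  qed
  then show "Phi S \<le> real m ^ card N" using finN by (simp add: card_cube)
qed

lemma step:
  assumes TN: "T \<subseteq> N" and eps: "eps > 0"
    and bad: "dl * real m ^ card T < real (card {a \<in> cube m T. \<not> pseudorandom m (N - T) r eps (restr m N F T a)})"
  shows "\<exists>T'. T' \<subseteq> N \<and> card T' \<le> card T + r * m ^ card T \<and>
           Phi T + dl * eps^2 * real m ^ card N / real m ^ r \<le> Phi T'"
proof -
  define B where "B = {a \<in> cube m T. \<not> pseudorandom m (N - T) r eps (restr m N F T a)}"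
  have fT: "finite T" using finT[OF TN] .
  have fCT: "finite (cube m T)" using fT by (simp add: cube_def finite_PiE)
  have BC: "B \<subseteq> cube m T" by (auto simp: B_def)
  have fB: "finite B" using BC fCT finite_subset by blast
  have am: "\<And>a. a \<in> cube m T \<Longrightarrow> \<forall>i\<in>T. a i < m" by (auto simp: cube_def PiE_iff)
  have "\<forall>a\<in>B. \<exists>R b. R \<subseteq> N - T \<and> card R \<le> r \<and> b \<in> cube m R \<and>
           eps < \<bar>f (T \<union> R) (\<lambda>i. if i \<in> T then a i else b i) - f T a\<bar>"
  proof
    fix a assume a: "a \<in> B"
    then have "a \<in> cube m T" by (simp add: B_def)
    from a pr_char[OF TN am[OF this]] show "\<exists>R b. R \<subseteq> N - T \<and> card R \<le> r \<and> b \<in> cube m R \<and>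
           eps < \<bar>f (T \<union> R) (\<lambda>i. if i \<in> T then a i else b i) - f T a\<bar>"
      by (auto simp: B_def not_le)
  qed
  then obtain Rf bf where Rb: "\<And>a. a \<in> B \<Longrightarrow> Rf a \<subseteq> N - T \<and> card (Rf a) \<le> r \<and> bf a \<in> cube m (Rf a) \<and>
           eps < \<bar>f (T \<union> Rf a) (\<lambda>i. if i \<in> T then a i else bf a i) - f T a\<bar>"
    by metis
  define T' where "T' = T \<union> (\<Union>a\<in>B. Rf a)"
  have T'N: "T' \<subseteq> N" using TN Rb by (auto simp: T'_def)
  have "card T' \<le> card T + card (\<Union>a\<in>B. Rf a)" unfolding T'_def by (rule card_Un_le)
  also have "card (\<Union>a\<in>B. Rf a) \<le> (\<Sum>a\<in>B. card (Rf a))" by (rule card_UN_le[OF fB])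
  also have "\<dots> \<le> (\<Sum>a\<in>B. r)" using Rb by (intro sum_mono) auto
  also have "\<dots> = card B * r" by simp
  also have "card B \<le> m ^ card T" using card_mono[OF fCT BC] card_cube[OF fT] by simp
  finally have cardT': "card T' \<le> card T + r * m ^ card T"
    by (metis (no_types, lifting) add_le_mono le_refl mult.commute mult_le_mono1 order_trans)
  have "Phi T' - Phi T = (\<Sum>a\<in>cube m T. (\<Sum>y\<in>cls T a. (f T' y)^2) - (\<Sum>y\<in>cls T a. (f T y)^2))"
    unfolding Phi_def decomp[OF TN] by (simp add: sum_subtractf)
  also have "\<dots> = (\<Sum>a\<in>cube m T. \<Sum>y\<in>cls T a. (f T' y - f T y)^2)"
    by (rule sum.cong[OF refl], rule pyth) (use T'N am in \<open>auto simp: T'_def\<close>)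
  finally have P1: "Phi T' - Phi T = (\<Sum>a\<in>cube m T. \<Sum>y\<in>cls T a. (f T' y - f T y)^2)" .
  have "(\<Sum>a\<in>B. \<Sum>y\<in>cls T a. (f T' y - f T y)^2) \<le> (\<Sum>a\<in>cube m T. \<Sum>y\<in>cls T a. (f T' y - f T y)^2)"
    by (rule sum_mono2[OF fCT BC]) (auto intro: sum_nonneg)
  moreover have "(\<Sum>a\<in>B. eps^2 * real m ^ card (N - T) / real m ^ r) \<le> (\<Sum>a\<in>B. \<Sum>y\<in>cls T a. (f T' y - f T y)^2)"
  proof (rule sum_mono)
    fix a assume a: "a \<in> B"
    then have aC: "a \<in> cube m T" using BC by auto
    have "eps^2 * real m ^ card (N - T) / real m ^ r \<le> (\<Sum>y\<in>cls T a. (f (T \<union> Rf a) y - f T y)^2)"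
      using Rb[OF a] eps by (intro gain[OF TN _ _ am[OF aC]]) auto
    also have "\<dots> \<le> (\<Sum>y\<in>cls T a. (f T' y - f T y)^2)"
      by (rule var_mono[OF _ _ T'N am[OF aC]]) (use a in \<open>auto simp: T'_def\<close>)
    finally show "eps^2 * real m ^ card (N - T) / real m ^ r \<le> (\<Sum>y\<in>cls T a. (f T' y - f T y)^2)" .
  qed
  moreover have "dl * eps^2 * real m ^ card N / real m ^ r \<le> (\<Sum>a\<in>B. eps^2 * real m ^ card (N - T) / real m ^ r)"
  proof -
    have cN: "card N = card T + card (N - T)" using card_Diff_subset[OF fT TN] card_mono[OF finN TN] by simp
    have "dl * eps^2 * real m ^ card N / real m ^ r = (dl * real m ^ card T) * (eps^2 * real m ^ card (N - T) / real m ^ r)"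
      by (simp add: cN power_add)
    also have "\<dots> \<le> real (card B) * (eps^2 * real m ^ card (N - T) / real m ^ r)"
      using bad unfolding B_def[symmetric] by (intro mult_right_mono) auto
    also have "\<dots> = (\<Sum>a\<in>B. eps^2 * real m ^ card (N - T) / real m ^ r)" by simp
    finally show ?thesis .
  qed
  ultimately have "Phi T + dl * eps^2 * real m ^ card N / real m ^ r \<le> Phi T'" using P1 by linarith
  then show ?thesis using T'N cardT' by blast
qed

lemma iter:
  assumes eps: "eps > 0" and dl: "dl > 0"
  shows "\<exists>T \<subseteq> N. card T \<le> ((\<lambda>k. k + r * m ^ k) ^^ j) 0 \<and>
     (mu m T {a \<in> cube m T. \<not> pseudorandom m (N - T) r eps (restr m N F T a)} \<le> dl \<or>
      real j * (dl * eps^2 / real m ^ r) * real m ^ card N \<le> Phi T)"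
proof (induction j)
  case 0
  show ?case by (rule exI[of _ "{}"]) (simp add: Phi_bounds)
next
  case (Suc j)
  define g where "g = (\<lambda>k::nat. k + r * m ^ k)"
  have gmono: "\<And>k k'. k \<le> k' \<Longrightarrow> g k \<le> g k'"
    unfolding g_def using mpos by (intro add_mono mult_left_mono power_increasing) auto
  have gS: "(g ^^ Suc j) 0 = g ((g ^^ j) 0)" by simp
  have gge: "(g ^^ j) 0 \<le> (g ^^ Suc j) 0" unfolding gS by (simp add: g_def)
  from Suc.IH obtain T where TN: "T \<subseteq> N" and cT: "card T \<le> (g ^^ j) 0"
    and alt: "mu m T {a \<in> cube m T. \<not> pseudorandom m (N - T) r eps (restr m N F T a)} \<le> dl \<or>
      real j * (dl * eps^2 / real m ^ r) * real m ^ card N \<le> Phi T"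
    unfolding g_def by blast
  show ?case
  proof (cases "mu m T {a \<in> cube m T. \<not> pseudorandom m (N - T) r eps (restr m N F T a)} \<le> dl")
    case True
    then show ?thesis using TN cT gge unfolding g_def by (meson order_trans)
  next
    case False
    let ?B = "{a \<in> cube m T. \<not> pseudorandom m (N - T) r eps (restr m N F T a)}"
    have fT: "finite T" using finT[OF TN] .
    have mu: "mu m T ?B = real (card ?B) / real m ^ card T"
      by (simp add: mu_def card_cube[OF fT] Int_absorb2)
    have pos: "real m ^ card T > 0" using mpos by simp
    have bad: "dl * real m ^ card T < real (card ?B)"
      using False pos unfolding mu by (simp add: not_le less_divide_eq)
    from step[OF TN eps bad] obtain T' where T'N: "T' \<subseteq> N"
      and cT': "card T' \<le> card T + r * m ^ card T"
      and P: "Phi T + dl * eps^2 * real m ^ card N / real m ^ r \<le> Phi T'" by blast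
    have "card T' \<le> g (card T)" using cT' by (simp add: g_def)
    also have "\<dots> \<le> (g ^^ Suc j) 0" unfolding gS by (rule gmono[OF cT])
    finally have c1: "card T' \<le> (g ^^ Suc j) 0" .
    have j: "real j * (dl * eps^2 / real m ^ r) * real m ^ card N \<le> Phi T" using alt False by auto
    have "real (Suc j) * (dl * eps^2 / real m ^ r) * real m ^ card N
       = real j * (dl * eps^2 / real m ^ r) * real m ^ card N + dl * eps^2 * real m ^ card N / real m ^ r"
      by (simp only: of_nat_Suc distrib_right times_divide_eq_right times_divide_eq_left mult_1_left mult.assoc, subst add_divide_distrib, rule add.commute)
    also have "\<dots> \<le> Phi T'" using j P by linarith
    finally show ?thesis using T'N c1 unfolding g_def by blast
  qed
qed

end

theorem lemma3p2:
  fixes r m :: nat and \<epsilon> \<delta> :: real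
  assumes "\<epsilon> > 0" and "\<delta> > 0"
  shows "\<exists>D::nat. \<forall>n \<ge> D. \<forall>F \<subseteq> cube m {..<n}.
           \<exists>T \<subseteq> {..<n}. card T \<le> D \<and>
             mu m T {a \<in> cube m T.
                \<not> pseudorandom m ({..<n} - T) r \<epsilon> (restr m {..<n} F T a)} \<le> \<delta>"
proof (cases "m = 0")
  case True
  show ?thesis
  proof (rule exI[of _ 1], intro allI impI)
    fix n :: nat and F assume n: "1 \<le> n" and "F \<subseteq> cube m {..<n}"
    have ce: "cube m {0::nat} = {}" using True by (auto simp: cube_def PiE_eq_empty_iff)
    have z: "\<And>X. mu m {0::nat} X = 0" by (simp add: mu_def ce)
    have s0: "{0::nat} \<subseteq> {..<n}" using n by auto
    show "\<exists>T \<subseteq> {..<n}. card T \<le> 1 \<and>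
             mu m T {a \<in> cube m T. \<not> pseudorandom m ({..<n} - T) r \<epsilon> (restr m {..<n} F T a)} \<le> \<delta>"
      apply (rule exI[of _ "{0}"])
      using s0 assms(2) by (simp only: z card_1_singleton_iff) auto
  qed
next
  case False
  define c where "c = \<delta> * \<epsilon>^2 / real m ^ r"
  define K where "K = nat \<lceil>real m ^ r / (\<delta> * \<epsilon>^2)\<rceil> + 1"
  have cpos: "c > 0" using assms False by (simp add: c_def)
  have Kc: "real K * c > 1"
  proof -
    have "real m ^ r / (\<delta> * \<epsilon>^2) < real K"
      using real_nat_ceiling_ge[of "real m ^ r / (\<delta> * \<epsilon>^2)"] unfolding K_def by simp
    then have "real m ^ r / (\<delta> * \<epsilon>^2) * c < real K * c" using cpos by (intro mult_strict_right_mono)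
    moreover have "real m ^ r / (\<delta> * \<epsilon>^2) * c = 1" using assms False by (simp add: c_def)
    ultimately show ?thesis by linarith
  qed
  show ?thesis
  proof (rule exI[of _ "((\<lambda>k::nat. k + r * m ^ k) ^^ K) 0"], intro allI impI)
    fix n :: nat and F assume "((\<lambda>k::nat. k + r * m ^ k) ^^ K) 0 \<le> n" and FQ: "F \<subseteq> cube m {..<n}"
    interpret fam m "{..<n}" F using FQ False by unfold_locales auto
    obtain T where TN: "T \<subseteq> {..<n}" and cT: "card T \<le> ((\<lambda>k::nat. k + r * m ^ k) ^^ K) 0"
      and alt: "mu m T {a \<in> cube m T. \<not> pseudorandom m ({..<n} - T) r \<epsilon> (restr m {..<n} F T a)} \<le> \<delta> \<or>
      real K * (\<delta> * \<epsilon>^2 / real m ^ r) * real m ^ card {..<n} \<le> Phi T"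
      using iter[OF assms, where r=r and j=K] by (elim exE conjE) (rule that; assumption)
    have "\<not> real K * c * real m ^ card {..<n} \<le> Phi T"
    proof
      assume h: "real K * c * real m ^ card {..<n} \<le> Phi T"
      have "Phi T \<le> real m ^ card {..<n}" by (rule Phi_bounds(2)[OF TN])
      moreover have "0 < real m ^ card {..<n}" using False by simp
      then have "1 * real m ^ card {..<n} < real K * c * real m ^ card {..<n}"
        using Kc by (intro mult_strict_right_mono)
      ultimately show False using h by linarith
    qed
    then show "\<exists>T \<subseteq> {..<n}. card T \<le> ((\<lambda>k::nat. k + r * m ^ k) ^^ K) 0 \<and>
             mu m T {a \<in> cube m T. \<not> pseudorandom m ({..<n} - T) r \<epsilon> (restr m {..<n} F T a)} \<le> \<delta>"
      using TN cT alt unfolding c_def by (intro exI[of _ T]) simp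
  qed
qed

end
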